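(* Let $\mathbb{K}\in\{\mathbb{R},\mathbb{C}\}$, $\star\in\{*,T\}$, $\epsilon_1,\epsilon_2\in\{1,-1\}$, and let $Q(\lambda)=\lambda^2M+\lambda D+K\in\mathbb{K}^{n\times n}[\lambda]$ satisfy $M^\star=\epsilon_1M$, $D^\star=\epsilon_2D$, $K^\star=\epsilon_1K$. Let $(\lambda_1,x_1)$ and $(\lambda_2,x_2)$ be eigenpairs of $Q(\lambda)$ (with $\lambda_i\in\mathbb{K}$, $x_i\in\mathbb{K}^n$). If $\lambda_2\neq\epsilon_1\epsilon_2\lambda_1^\star$, then $\lambda_2x_1^\star Mx_2+\epsilon_1\epsilon_2\lambda_1^\star x_1^\star Mx_2+x_1^\star Dx_2=0$.
   Context: For a matrix or vector $A$, $A^\star$ is $A^*$ (conjugate transpose) if $\star=*$ and $A^T$ if $\star=T$; for $\lambda\in\mathbb{C}$, $\lambda^\star=\overline{\lambda}$ if $\star=*$ and $\lambda^\star=\lambda$ if $\star=T$. An eigenpair $(\lambda_0,x_0)$ of $Q$ means $x_0\neq0$ and $(\lambda_0^2M+\lambda_0D+K)x_0=0$. *)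

theory Defs
  imports "Jordan_Normal_Form.Matrix" "Jordan_Normal_Form.Conjugate"
begin

datatype star = Adj | Tr

definition star_mat :: "star \<Rightarrow> 'a::conjugatable_field mat \<Rightarrow> 'a mat" where
  "star_mat s A = (if s = Adj then transpose_mat (map_mat conjugate A) else transpose_mat A)"

definition star_vec :: "star \<Rightarrow> 'a::conjugatable_field vec \<Rightarrow> 'a vec" where
  "star_vec s x = (if s = Adj then map_vec conjugate x else x)"

definition star_sc :: "star \<Rightarrow> 'a::conjugatable_field \<Rightarrow> 'a" where
  "star_sc s c = (if s = Adj then conjugate c else c)"

definition quad_eval :: "'a::field mat \<Rightarrow> 'a mat \<Rightarrow> 'a mat \<Rightarrow> 'a \<Rightarrow> 'a mat" where
  "quad_eval M D K lam = lam^2 \<cdot>\<^sub>m M + lam \<cdot>\<^sub>m D + K"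

definition quad_eigenpair :: "'a::field mat \<Rightarrow> 'a mat \<Rightarrow> 'a mat \<Rightarrow> 'a \<Rightarrow> 'a vec \<Rightarrow> bool" where
  "quad_eigenpair M D K lam x \<longleftrightarrow>
     x \<noteq> 0\<^sub>v (dim_vec x) \<and> quad_eval M D K lam *\<^sub>v x = 0\<^sub>v (dim_row M)"

end

theory Submission
  imports Defs
begin

lemma c_add: "star_sc s (a + b) = star_sc s a + star_sc s (b::'a::conjugatable_field)"
  by (simp add: star_sc_def conjugate_dist_add)
lemma c_mult: "star_sc s (a * b) = star_sc s a * star_sc s (b::'a::conjugatable_field)"
  by (simp add: star_sc_def conjugate_dist_mul)
lemma c_sum: "star_sc s (sum f {..<n::nat}) = (\<Sum>i<n. star_sc s (f i::'a::conjugatable_field))"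
  by (induct n) (auto simp: c_add star_sc_def conjugate_dist_add)

theorem corollary2p5:
  fixes M D K :: "'a::conjugatable_field mat"
    and s :: star and e1 e2 :: 'a
    and lam1 lam2 :: 'a and x1 x2 :: "'a vec" and n :: nat
  assumes "M \<in> carrier_mat n n" "D \<in> carrier_mat n n" "K \<in> carrier_mat n n"
    and "e1 \<in> {1, -1}" "e2 \<in> {1, -1}"
    and "star_mat s M = e1 \<cdot>\<^sub>m M" "star_mat s D = e2 \<cdot>\<^sub>m D" "star_mat s K = e1 \<cdot>\<^sub>m K"
    and "x1 \<in> carrier_vec n" "x2 \<in> carrier_vec n"
    and "quad_eigenpair M D K lam1 x1" "quad_eigenpair M D K lam2 x2"
    and "lam2 \<noteq> e1 * e2 * star_sc s lam1"
  shows "lam2 * (star_vec s x1 \<bullet> (M *\<^sub>v x2))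
           + e1 * e2 * star_sc s lam1 * (star_vec s x1 \<bullet> (M *\<^sub>v x2))
           + star_vec s x1 \<bullet> (D *\<^sub>v x2) = 0"
proof -
  note A = assms
  define c :: "'a \<Rightarrow> 'a" where "c = star_sc s"
  define y where "y = star_vec s x1"
  define mu where "mu = c lam1"
  have yi: "y $ i = c (x1 $ i)" if "i < n" for i
    using that A(9) by (auto simp: y_def c_def star_vec_def star_sc_def)
  have yc: "y \<in> carrier_vec n" using A(9) by (auto simp: y_def star_vec_def)
  have sym: "c (X $$ (i,j)) = e * X $$ (j,i)"
    if "X \<in> carrier_mat n n" "star_mat s X = e \<cdot>\<^sub>m X" "i < n" "j < n" for X e i j
  proof -
    have "star_mat s X $$ (j,i) = (e \<cdot>\<^sub>m X) $$ (j,i)" using that(2) by simp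
    thus ?thesis using that(1,3,4) by (auto simp: star_mat_def c_def star_sc_def)
  qed
  define S where "S X = (\<Sum>j<n. \<Sum>i<n. y $ j * X $$ (j,i) * x2 $ i)" for X :: "'a mat"
  have dotS: "y \<bullet> (X *\<^sub>v x2) = S X" if "X \<in> carrier_mat n n" for X
    using that yc A(10)
    by (auto simp: S_def scalar_prod_def mult_mat_vec_def sum_distrib_left mult.assoc
        lessThan_atLeast0 intro!: sum.cong)
  have Q1: "(\<Sum>j<n. (lam1^2 * M $$ (i,j) + lam1 * D $$ (i,j) + K $$ (i,j)) * x1 $ j) = 0"
    if "i < n" for i
  proof -
    have "(quad_eval M D K lam1 *\<^sub>v x1) $ i = 0"
      using A(11) A(1) that unfolding quad_eigenpair_def by auto
    thus ?thesis using that A(1-3) A(9)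
      by (auto simp: quad_eval_def mult_mat_vec_def scalar_prod_def lessThan_atLeast0)
  qed
  have Q2: "(\<Sum>i<n. (lam2^2 * M $$ (j,i) + lam2 * D $$ (j,i) + K $$ (j,i)) * x2 $ i) = 0"
    if "j < n" for j
  proof -
    have "(quad_eval M D K lam2 *\<^sub>v x2) $ j = 0"
      using A(12) A(1) that unfolding quad_eigenpair_def by auto
    thus ?thesis using that A(1-3) A(10)
      by (auto simp: quad_eval_def mult_mat_vec_def scalar_prod_def lessThan_atLeast0)
  qed
  have E2: "lam2^2 * S M + lam2 * S D + S K = 0"
  proof -
    have "0 = (\<Sum>j<n. y $ j * (\<Sum>i<n. (lam2^2 * M $$ (j,i) + lam2 * D $$ (j,i) + K $$ (j,i)) * x2 $ i))"
      using Q2 by simp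
    also have "\<dots> = lam2^2 * S M + lam2 * S D + S K"
      by (simp add: S_def sum_distrib_left sum_distrib_right sum.distrib algebra_simps)
    finally show ?thesis by simp
  qed
  have Q1c: "(\<Sum>j<n. (mu^2 * e1 * M $$ (j,i) + mu * e2 * D $$ (j,i) + e1 * K $$ (j,i)) * y $ j) = 0"
    if "i < n" for i
  proof -
    have "c (\<Sum>j<n. (lam1^2 * M $$ (i,j) + lam1 * D $$ (i,j) + K $$ (i,j)) * x1 $ j) = 0"
      using Q1[OF that] by (simp add: c_def star_sc_def)
    hence "(\<Sum>j<n. c ((lam1^2 * M $$ (i,j) + lam1 * D $$ (i,j) + K $$ (i,j)) * x1 $ j)) = 0"
      by (simp add: c_def c_sum)
    moreover have "c ((lam1^2 * M $$ (i,j) + lam1 * D $$ (i,j) + K $$ (i,j)) * x1 $ j)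
       = (mu^2 * e1 * M $$ (j,i) + mu * e2 * D $$ (j,i) + e1 * K $$ (j,i)) * y $ j" if "j < n" for j
      using sym[OF A(1) A(6) \<open>i<n\<close> that] sym[OF A(2) A(7) \<open>i<n\<close> that] sym[OF A(3) A(8) \<open>i<n\<close> that]
        yi[OF that]
      by (simp add: c_def c_add c_mult power2_eq_square mu_def mult.assoc)
    ultimately show ?thesis by simp
  qed
  have E1: "e1 * mu^2 * S M + e2 * mu * S D + e1 * S K = 0"
  proof -
    have "0 = (\<Sum>i<n. x2 $ i * (\<Sum>j<n. (mu^2 * e1 * M $$ (j,i) + mu * e2 * D $$ (j,i) + e1 * K $$ (j,i)) * y $ j))"
      using Q1c by simp
    also have "\<dots> = e1 * mu^2 * S M + e2 * mu * S D + e1 * S K"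
      unfolding S_def
      by (subst (1 2 3) sum.swap) (simp add: sum_distrib_left sum_distrib_right sum.distrib algebra_simps)
    finally show ?thesis by simp
  qed
  have dM: "y \<bullet> (M *\<^sub>v x2) = S M" using dotS A(1) by blast
  have dD: "y \<bullet> (D *\<^sub>v x2) = S D" using dotS A(2) by blast
  have ne: "lam2 - e1 * e2 * mu \<noteq> 0" using A(13) by (simp add: mu_def c_def)
  have e1s: "e1 * e1 = 1" using A(4) by auto
  have es: "(e1 * e2) * (e1 * e2) = 1" using A(4,5) by auto
  have E1': "mu^2 * S M + (e1 * e2) * mu * S D + S K = 0"
  proof -
    have "e1 * (e1 * mu^2 * S M + e2 * mu * S D + e1 * S K) = 0" using E1 by simp
    moreover have "e1 * (e1 * mu^2 * S M + e2 * mu * S D + e1 * S K)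
       = (e1 * e1) * mu^2 * S M + (e1 * e2) * mu * S D + (e1 * e1) * S K"
      by (simp add: algebra_simps)
    ultimately show ?thesis using e1s by simp
  qed
  have key: "(lam2 - e1 * e2 * mu) * (lam2 * S M + e1 * e2 * mu * S M + S D) = 0"
  proof -
    have "(lam2 - e1 * e2 * mu) * (lam2 * S M + e1 * e2 * mu * S M + S D)
      = (lam2^2 * S M + lam2 * S D + S K) - (((e1 * e2) * (e1 * e2)) * mu^2 * S M + (e1 * e2) * mu * S D + S K)"
      by (simp add: algebra_simps power2_eq_square)
    also have "\<dots> = 0" using E1' E2 es by simp
    finally show ?thesis .
  qed
  show ?thesis using key ne dM dD by (simp add: y_def mu_def c_def)
qed

end
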